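(* Let $(\Omega,\mathcal A)$ be a measurable space, let $U\subset\mathbb C^n$ be an open set such that $\lambda z\in U$ whenever $z\in U$ and $\lambda\in\mathbb C$, $|\lambda|\le1$, and let $f(\omega,z)$ be a random holomorphic function in $U$. Then there is a sequence $p_m(\omega,z)$, $m=0,1,\ldots$, of random polynomials such that, for every $\omega\in\Omega$, $p_m(\omega,\cdot)$ converges to $f(\omega,\cdot)$ uniformly on every compact subset of $U$.
   Context: A random holomorphic function on an open set $U\subset\mathbb C^n$ is a function $f:\Omega\times U\to\mathbb C$ such that $f(\omega,\cdot)$ is holomorphic for each $\omega$ and $f(\cdot,z)$ is measurable for each $z\in U$. A random polynomial is a function $p(\omega,z)$ such that $p(\omega,\cdot)$ is a polynomial for each $\omega$ and $p(\cdot,z)$ is measurable for each $z$. *)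

theory Defs
  imports "HOL-Analysis.Analysis"
begin

definition holo_on :: "(complex ^ 'n \<Rightarrow> complex) \<Rightarrow> (complex ^ 'n) set \<Rightarrow> bool" where
  "holo_on f U \<longleftrightarrow> (\<forall>z\<in>U. \<exists>L. (f has_derivative L) (at z) \<and> (\<forall>c v. L (c *s v) = c * L v))"

definition poly_fun :: "(complex ^ 'n \<Rightarrow> complex) \<Rightarrow> bool" where
  "poly_fun p \<longleftrightarrow> (\<exists>(A :: ('n \<Rightarrow> nat) set) (c :: ('n \<Rightarrow> nat) \<Rightarrow> complex). finite A \<and>
      (\<forall>z. p z = (\<Sum>\<alpha>\<in>A. c \<alpha> * (\<Prod>i\<in>UNIV. (z $ i) ^ (\<alpha> i)))))"

definition random_holomorphic :: "'a measure \<Rightarrow> (complex ^ 'n) set \<Rightarrow> ('a \<Rightarrow> complex ^ 'n \<Rightarrow> complex) \<Rightarrow> bool" where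
  "random_holomorphic M U f \<longleftrightarrow>
     (\<forall>\<omega>\<in>space M. holo_on (f \<omega>) U) \<and> (\<forall>z\<in>U. (\<lambda>\<omega>. f \<omega> z) \<in> borel_measurable M)"

definition random_polynomial :: "'a measure \<Rightarrow> ('a \<Rightarrow> complex ^ 'n \<Rightarrow> complex) \<Rightarrow> bool" where
  "random_polynomial M p \<longleftrightarrow>
     (\<forall>\<omega>\<in>space M. poly_fun (p \<omega>)) \<and> (\<forall>z. (\<lambda>\<omega>. p \<omega> z) \<in> borel_measurable M)"

end

theory Submission
  imports Defs "HOL-Complex_Analysis.Complex_Analysis" "HOL-Computational_Algebra.Polynomial"
begin

lemma smult_vec_eq: "c *s x = (\<chi> i. c * x $ i)"
  by (simp add: vector_scalar_mult_def)

lemma norm_smult_vec: "norm (c *s (x::complex^'n)) = norm c * norm x"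
  unfolding norm_vec_def smult_vec_eq
  by (simp add: norm_mult L2_set_right_distrib)

lemma bounded_linear_smult_vec: "bounded_linear (\<lambda>t::complex. t *s (b::complex^'n))"
proof (rule bounded_linear_intro[where K="norm b"])
  show "\<And>x y. (x + y) *s b = x *s b + y *s b" by (rule vector_sadd_rdistrib)
  show "\<And>r x. (r *\<^sub>R x) *s b = r *\<^sub>R (x *s b)"
    by (simp add: vec_eq_iff vector_scaleR_component)
  show "\<And>x. norm (x *s b) \<le> norm x * norm b" by (simp add: norm_smult_vec)
qed

lemma continuous_on_smult_vec[continuous_intros]:
  assumes "continuous_on S f" "continuous_on S (g :: _ \<Rightarrow> complex^'n)"
  shows "continuous_on S (\<lambda>x. f x *s g x)"
  unfolding smult_vec_eq
  by (intro continuous_intros assms continuous_on_vec_lambda)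

definition mono_vec :: "('n::finite \<Rightarrow> nat) \<Rightarrow> complex^'n \<Rightarrow> complex" where
  "mono_vec \<alpha> z = (\<Prod>i\<in>UNIV. (z $ i) ^ (\<alpha> i))"

lemma poly_fun_gen:
  fixes \<beta> :: "'x \<Rightarrow> 'n::finite \<Rightarrow> nat"
  assumes "finite X"
  shows "poly_fun (\<lambda>z. \<Sum>x\<in>X. d x * mono_vec (\<beta> x) z)"
  unfolding poly_fun_def
proof (intro exI conjI allI)
  show "finite (\<beta> ` X)" using assms by simp
  fix z :: "complex^'n"
  have "(\<Sum>x\<in>X. d x * mono_vec (\<beta> x) z) =
        (\<Sum>\<alpha>\<in>\<beta> ` X. \<Sum>x\<in>{x\<in>X. \<beta> x = \<alpha>}. d x * mono_vec (\<beta> x) z)"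
    by (rule sum.group[symmetric]) (use assms in auto)
  also have "\<dots> = (\<Sum>\<alpha>\<in>\<beta> ` X. (\<Sum>x\<in>{x\<in>X. \<beta> x = \<alpha>}. d x) * mono_vec \<alpha> z)"
    by (intro sum.cong refl) (auto simp: sum_distrib_right)
  finally show "(\<Sum>x\<in>X. d x * mono_vec (\<beta> x) z) =
     (\<Sum>\<alpha>\<in>\<beta> ` X. (\<Sum>x\<in>{x\<in>X. \<beta> x = \<alpha>}. d x) * (\<Prod>i\<in>UNIV. z $ i ^ \<alpha> i))"
    by (simp add: mono_vec_def)
qed

lemma poly_funE:
  assumes "poly_fun p"
  obtains A c where "finite A" "\<And>z. p z = (\<Sum>\<alpha>\<in>A. c \<alpha> * mono_vec \<alpha> z)"
  using assms unfolding poly_fun_def mono_vec_def by blast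

lemma poly_fun_cong: "poly_fun p \<Longrightarrow> (\<And>z. p z = q z) \<Longrightarrow> poly_fun q"
proof -
  assume "poly_fun p" "\<And>z. p z = q z"
  then have "p = q" by auto
  with \<open>poly_fun p\<close> show ?thesis by simp
qed

lemma mono_vec_add: "mono_vec (\<lambda>i. \<alpha> i + \<beta> i) z = mono_vec \<alpha> z * mono_vec \<beta> z"
  by (simp add: mono_vec_def power_add prod.distrib)

lemma poly_fun_const: "poly_fun (\<lambda>z. c)"
proof -
  have "poly_fun (\<lambda>z. \<Sum>x\<in>{()}. c * mono_vec (\<lambda>_. 0) z)"
    by (rule poly_fun_gen) simp
  then show ?thesis by (simp add: mono_vec_def)
qed

lemma poly_fun_coord: "poly_fun (\<lambda>z::complex^'n::finite. vec_nth z i)"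
proof -
  have "poly_fun (\<lambda>z::complex^'n. \<Sum>x\<in>{()}. 1 * mono_vec (\<lambda>j. if j = i then 1 else 0) z)"
    by (rule poly_fun_gen) simp
  moreover have "mono_vec (\<lambda>j. if j = i then 1 else 0) z = vec_nth z i" for z :: "complex^'n"
  proof -
    have "mono_vec (\<lambda>j. if j = i then 1 else 0) z = (\<Prod>j\<in>UNIV. if j = i then z $ j else 1)"
      unfolding mono_vec_def by (intro prod.cong) auto
    also have "\<dots> = vec_nth z i" by (subst prod.delta) auto
    finally show ?thesis .
  qed
  ultimately show ?thesis by simp
qed

lemma poly_fun_add:
  assumes "poly_fun p" "poly_fun q"
  shows "poly_fun (\<lambda>z. p z + q z)"
proof -
  obtain A c where A: "finite A" "\<And>z. p z = (\<Sum>\<alpha>\<in>A. c \<alpha> * mono_vec \<alpha> z)"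
    using poly_funE[OF assms(1)] by blast
  obtain B e where B: "finite B" "\<And>z. q z = (\<Sum>\<alpha>\<in>B. e \<alpha> * mono_vec \<alpha> z)"
    using poly_funE[OF assms(2)] by blast
  have "poly_fun (\<lambda>z. \<Sum>x\<in>A <+> B. case_sum c e x * mono_vec (case_sum id id x) z)"
    by (rule poly_fun_gen) (use A B in simp)
  then show ?thesis
    by (rule poly_fun_cong) (simp add: A B sum.Plus o_def)
qed

lemma poly_fun_mult:
  assumes "poly_fun p" "poly_fun q"
  shows "poly_fun (\<lambda>z. p z * q z)"
proof -
  obtain A c where A: "finite A" "\<And>z. p z = (\<Sum>\<alpha>\<in>A. c \<alpha> * mono_vec \<alpha> z)"
    using poly_funE[OF assms(1)] by blast
  obtain B e where B: "finite B" "\<And>z. q z = (\<Sum>\<alpha>\<in>B. e \<alpha> * mono_vec \<alpha> z)"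
    using poly_funE[OF assms(2)] by blast
  have "poly_fun (\<lambda>z. \<Sum>x\<in>A \<times> B. (c (fst x) * e (snd x)) * mono_vec (\<lambda>i. fst x i + snd x i) z)"
    by (rule poly_fun_gen) (use A B in simp)
  then show ?thesis
  proof (rule poly_fun_cong)
    fix z
    show "(\<Sum>x\<in>A \<times> B. (c (fst x) * e (snd x)) * mono_vec (\<lambda>i. fst x i + snd x i) z) = p z * q z"
      unfolding A B sum_product mono_vec_add
      by (simp add: sum.cartesian_product case_prod_unfold algebra_simps)
  qed
qed

lemma poly_fun_sum:
  "finite S \<Longrightarrow> (\<And>x. x \<in> S \<Longrightarrow> poly_fun (p x)) \<Longrightarrow> poly_fun (\<lambda>z. \<Sum>x\<in>S. p x z)"
  by (induction S rule: finite_induct) (auto intro: poly_fun_const poly_fun_add)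

lemma poly_fun_prod:
  "finite S \<Longrightarrow> (\<And>x. x \<in> S \<Longrightarrow> poly_fun (p x)) \<Longrightarrow> poly_fun (\<lambda>z. \<Prod>x\<in>S. p x z)"
  by (induction S rule: finite_induct) (auto intro: poly_fun_const poly_fun_mult)

lemma poly_fun_diff:
  assumes "poly_fun p" "poly_fun q"
  shows "poly_fun (\<lambda>z. p z - q z)"
proof -
  have "poly_fun (\<lambda>z. p z + (-1) * q z)"
    by (intro poly_fun_add poly_fun_mult poly_fun_const assms)
  then show ?thesis by simp
qed

lemma poly_fun_divide_const:
  assumes "poly_fun p"
  shows "poly_fun (\<lambda>z. p z / c)"
proof -
  have "poly_fun (\<lambda>z. p z * (1/c))"
    by (intro poly_fun_mult poly_fun_const assms)
  then show ?thesis by simp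
qed

definition lagr :: "nat \<Rightarrow> nat \<Rightarrow> complex \<Rightarrow> complex" where
  "lagr k m s = (\<Prod>l\<in>{..k}-{m}. (s - of_nat l) / (of_nat m - of_nat l))"

lemma lagr_node:
  assumes "m \<le> k" "m' \<le> k"
  shows "lagr k m (of_nat m') = (if m = m' then 1 else 0)"
proof (cases "m = m'")
  case True
  have "(\<Prod>l\<in>{..k}-{m}. (of_nat m - of_nat l) / (of_nat m - of_nat l) :: complex) = 1"
    by (rule prod.neutral) auto
  then show ?thesis using True by (simp add: lagr_def)
next
  case False
  then have "m' \<in> {..k}-{m}" using assms by auto
  then have "(\<Prod>l\<in>{..k}-{m}. (of_nat m' - of_nat l) / (of_nat m - of_nat l) :: complex) = 0"
    by (intro prod_zero) auto
  then show ?thesis using False by (simp add: lagr_def)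
qed

lemma lagrange_interp:
  fixes f :: "complex \<Rightarrow> complex"
  assumes f: "\<And>s. f s = (\<Sum>j\<le>k. \<beta> j * s ^ j)"
  shows "f s = (\<Sum>m\<le>k. lagr k m s * f (of_nat m))"
proof -
  define P where "P = (\<Sum>j\<le>k. monom (\<beta> j) j)"
  define Q where "Q = (\<Sum>m\<le>k. smult (f (of_nat m))
          (\<Prod>l\<in>{..k}-{m}. smult (1 / (of_nat m - of_nat l)) [:- of_nat l, 1:]))"
  have polyP: "poly P x = f x" for x
    by (simp add: P_def poly_sum poly_monom f)
  have polyQ: "poly Q x = (\<Sum>m\<le>k. lagr k m x * f (of_nat m))" for x
    by (simp add: Q_def poly_sum poly_prod lagr_def mult.commute diff_divide_distrib)
  have degP: "degree P \<le> k"
    unfolding P_def by (rule degree_sum_le) (auto intro: order_trans[OF degree_monom_le])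
  have degQ: "degree Q \<le> k"
    unfolding Q_def
  proof (rule degree_sum_le)
    fix m assume m: "m \<in> {..k}"
    have "degree (\<Prod>l\<in>{..k}-{m}. smult (1 / (of_nat m - of_nat l)) [:- of_nat l, 1::complex:])
          \<le> sum (degree \<circ> (\<lambda>l. smult (1 / (of_nat m - of_nat l)) [:- of_nat l, 1::complex:])) ({..k}-{m})"
      by (rule degree_prod_sum_le) simp
    also have "\<dots> \<le> sum (\<lambda>_. 1) ({..k}-{m})"
      by (intro sum_mono) (auto intro: order_trans[OF degree_smult_le])
    also have "\<dots> \<le> k" using m by simp
    finally show "degree (smult (f (of_nat m))
          (\<Prod>l\<in>{..k}-{m}. smult (1 / (of_nat m - of_nat l)) [:- of_nat l, 1:])) \<le> k"
      by (rule order_trans[OF degree_smult_le])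
  qed simp
  have "P = Q"
  proof (rule poly_eqI_degree[where A="of_nat ` {..k}"])
    have "card (of_nat ` {..k} :: complex set) = Suc k"
      by (subst card_image) (auto simp: inj_on_def)
    then show "degree P < card (of_nat ` {..k} :: complex set)"
      "degree Q < card (of_nat ` {..k} :: complex set)" using degP degQ by auto
    fix x :: complex assume "x \<in> of_nat ` {..k}"
    then obtain m' where m': "m' \<le> k" "x = of_nat m'" by auto
    have "(\<Sum>m\<le>k. lagr k m x * f (of_nat m)) = (\<Sum>m\<le>k. if m = m' then f (of_nat m) else 0)"
      using m' by (intro sum.cong refl) (auto simp: lagr_node)
    also have "\<dots> = f x" using m' by (simp add: sum.delta)
    finally show "poly P x = poly Q x" by (simp add: polyP polyQ)
  qed
  then show ?thesis using polyP[of s] polyQ[of s] by simp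
qed

definition upd :: "complex^'n \<Rightarrow> 'n \<Rightarrow> complex \<Rightarrow> complex^'n" where
  "upd z i s = (\<chi> j. if j = i then s else z $ j)"

definition updS :: "complex^'n \<Rightarrow> 'n set \<Rightarrow> ('n \<Rightarrow> nat) \<Rightarrow> complex^'n" where
  "updS z S \<alpha> = (\<chi> j. if j \<in> S then of_nat (\<alpha> j) else z $ j)"

definition cpoly :: "nat \<Rightarrow> (complex^'n \<Rightarrow> complex) \<Rightarrow> bool" where
  "cpoly k c \<longleftrightarrow> (\<forall>z i. \<exists>\<beta>. \<forall>s. c (upd z i s) = (\<Sum>j\<le>k. \<beta> j * s ^ j))"

lemma cpoly_expand:
  assumes "cpoly k c" "finite S"
  shows "c z = (\<Sum>\<alpha>\<in>PiE S (\<lambda>_. {..k}). (\<Prod>i\<in>S. lagr k (\<alpha> i) (z $ i)) * c (updS z S \<alpha>))"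
  using assms(2)
proof (induction S rule: finite_induct)
  case empty
  have "updS z {} \<alpha> = z" for \<alpha> by (simp add: updS_def)
  then show ?case by simp
next
  case (insert a S)
  have step: "c (updS z S \<alpha>) = (\<Sum>m\<le>k. lagr k m (z $ a) * c (updS z (insert a S) (\<alpha>(a:=m))))" for \<alpha>
  proof -
    obtain \<beta> where \<beta>: "\<And>s. c (upd (updS z S \<alpha>) a s) = (\<Sum>j\<le>k. \<beta> j * s ^ j)"
      using assms(1) unfolding cpoly_def by blast
    have e1: "upd (updS z S \<alpha>) a (z $ a) = updS z S \<alpha>"
      using insert(2) by (simp add: upd_def updS_def vec_eq_iff)
    have e2: "upd (updS z S \<alpha>) a (of_nat m) = updS z (insert a S) (\<alpha>(a:=m))" for m
      using insert(2) by (auto simp: upd_def updS_def vec_eq_iff)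
    show ?thesis
      using lagrange_interp[OF \<beta>, of "vec_nth z a"]
      by (simp add: e1 e2)
  qed
  have inj: "inj_on (\<lambda>(y, g). g(a := y)) ({..k} \<times> PiE S (\<lambda>_. {..k}))"
  proof (rule inj_onI, clarify)
    fix y g y' g'
    assume g: "g \<in> PiE S (\<lambda>_. {..k})" and g': "g' \<in> PiE S (\<lambda>_. {..k})"
      and eq: "g(a := y) = g'(a := y')"
    have "y = y'" using fun_cong[OF eq, of a] by simp
    moreover have "g = g'"
    proof
      fix x show "g x = g' x"
      proof (cases "x = a")
        case True
        then show ?thesis using g g' insert(2) by (auto simp: PiE_def extensional_def)
      next
        case False
        then show ?thesis using fun_cong[OF eq, of x] by simp
      qed
    qed
    ultimately show "y = y' \<and> g = g'" by simp
  qed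
  have "c z = (\<Sum>\<alpha>\<in>PiE S (\<lambda>_. {..k}). (\<Prod>i\<in>S. lagr k (\<alpha> i) (z $ i)) * c (updS z S \<alpha>))"
    by (rule insert.IH)
  also have "\<dots> = (\<Sum>\<alpha>\<in>PiE S (\<lambda>_. {..k}). \<Sum>m\<le>k. (\<Prod>i\<in>insert a S. lagr k ((\<alpha>(a:=m)) i) (z $ i))
                    * c (updS z (insert a S) (\<alpha>(a:=m))))"
  proof (intro sum.cong refl)
    fix \<alpha> assume "\<alpha> \<in> PiE S (\<lambda>_. {..k})"
    have pr: "(\<Prod>i\<in>insert a S. lagr k ((\<alpha>(a:=m)) i) (z $ i)) = lagr k m (z $ a) * (\<Prod>i\<in>S. lagr k (\<alpha> i) (z $ i))" for m
    proof -
      have "(\<Prod>i\<in>S. lagr k ((\<alpha>(a:=m)) i) (z $ i)) = (\<Prod>i\<in>S. lagr k (\<alpha> i) (z $ i))"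
        using insert(2) by (intro prod.cong refl) auto
      then show ?thesis by (simp only: prod.insert[OF insert(1,2)] fun_upd_same)
    qed
    show "(\<Prod>i\<in>S. lagr k (\<alpha> i) (z $ i)) * c (updS z S \<alpha>) =
      (\<Sum>m\<le>k. (\<Prod>i\<in>insert a S. lagr k ((\<alpha>(a:=m)) i) (z $ i)) * c (updS z (insert a S) (\<alpha>(a:=m))))"
      unfolding step pr sum_distrib_left by (intro sum.cong refl) (simp add: algebra_simps)
  qed
  also have "\<dots> = (\<Sum>m\<le>k. \<Sum>\<alpha>\<in>PiE S (\<lambda>_. {..k}). (\<Prod>i\<in>insert a S. lagr k ((\<alpha>(a:=m)) i) (z $ i))
                    * c (updS z (insert a S) (\<alpha>(a:=m))))"
    by (rule sum.swap)
  also have "\<dots> = (\<Sum>(m,\<alpha>)\<in>{..k} \<times> PiE S (\<lambda>_. {..k}). (\<Prod>i\<in>insert a S. lagr k ((\<alpha>(a:=m)) i) (z $ i))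
                    * c (updS z (insert a S) (\<alpha>(a:=m))))"
    by (rule sum.cartesian_product)
  also have "\<dots> = (\<Sum>\<alpha>\<in>PiE (insert a S) (\<lambda>_. {..k}). (\<Prod>i\<in>insert a S. lagr k (\<alpha> i) (z $ i))
                    * c (updS z (insert a S) \<alpha>))"
    unfolding PiE_insert_eq
    by (subst sum.reindex[OF inj]) (simp add: case_prod_unfold)
  finally show ?case .
qed

lemma cpoly_poly_fun:
  fixes c :: "complex^'n::finite \<Rightarrow> complex"
  assumes "cpoly k c"
  shows "poly_fun c"
proof -
  have eq: "c z = (\<Sum>\<alpha>\<in>PiE UNIV (\<lambda>_. {..k}). (\<Prod>i\<in>UNIV. lagr k (\<alpha> i) (z $ i)) * c (updS 0 UNIV \<alpha>))" for z
  proof -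
    have "updS z UNIV \<alpha> = updS 0 UNIV \<alpha>" for \<alpha> by (simp add: updS_def)
    then show ?thesis using cpoly_expand[OF assms, of UNIV z] by simp
  qed
  have "poly_fun (\<lambda>z::complex^'n. \<Sum>\<alpha>\<in>PiE UNIV (\<lambda>_. {..k}). (\<Prod>i\<in>UNIV. lagr k (\<alpha> i) (z $ i)) * c (updS 0 UNIV \<alpha>))"
  proof (intro poly_fun_sum poly_fun_mult poly_fun_prod poly_fun_const)
    show "finite (PiE (UNIV::'n set) (\<lambda>_. {..k}))" by (intro finite_PiE) auto
    fix \<alpha> i
    show "poly_fun (\<lambda>z. lagr k (\<alpha> i) (z $ i))"
      unfolding lagr_def
      by (intro poly_fun_prod poly_fun_divide_const poly_fun_diff poly_fun_coord poly_fun_const) auto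
  qed auto
  then show ?thesis by (rule poly_fun_cong) (rule eq[symmetric])
qed

lemma holo_on_line:
  assumes "holo_on g U" "x \<in> {t. a + t *s b \<in> U}"
  shows "((\<lambda>t. g (a + t *s b)) has_field_derivative (SOME L. (g has_derivative L) (at (a + x *s b)) \<and> (\<forall>c v. L (c *s v) = c * L v)) b) (at x)"
proof -
  define L where "L = (SOME L. (g has_derivative L) (at (a + x *s b)) \<and> (\<forall>c v. L (c *s v) = c * L v))"
  have "\<exists>L. (g has_derivative L) (at (a + x *s b)) \<and> (\<forall>c v. L (c *s v) = c * L v)"
    using assms unfolding holo_on_def by auto
  then have "(g has_derivative L) (at (a + x *s b)) \<and> (\<forall>c v. L (c *s v) = c * L v)"
    unfolding L_def by (rule someI_ex)
  then have L: "(g has_derivative L) (at (a + x *s b))" "\<And>c v. L (c *s v) = c * L v"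
    by auto
  have d1: "((\<lambda>t. a + t *s b) has_derivative (\<lambda>d. d *s b)) (at x)"
    using has_derivative_add[OF has_derivative_const[of a] bounded_linear.has_derivative[OF bounded_linear_smult_vec has_derivative_ident]]
    by simp
  have "((g \<circ> (\<lambda>t. a + t *s b)) has_derivative (L \<circ> (\<lambda>d. d *s b))) (at x)"
    by (rule diff_chain_at[OF d1]) (simp add: L)
  moreover have "L \<circ> (\<lambda>d. d *s b) = (*) (L b)"
    by (auto simp: L(2) fun_eq_iff mult.commute)
  ultimately show ?thesis
    unfolding has_field_derivative_def L_def[symmetric] by (simp add: o_def)
qed

lemma holo_on_line_holomorphic:
  assumes "holo_on g U"
  shows "(\<lambda>t. g (a + t *s b)) holomorphic_on {t. a + t *s b \<in> U}"
  unfolding holomorphic_on_def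
  using holo_on_line[OF assms] field_differentiable_at_within field_differentiable_def by blast

lemma holo_on_line_holomorphic0:
  assumes "holo_on g U"
  shows "(\<lambda>t. g (t *s b)) holomorphic_on {t. t *s b \<in> U}"
  using holo_on_line_holomorphic[OF assms, of 0 b] by simp

lemma holo_on_continuous:
  assumes "holo_on g U"
  shows "continuous_on U g"
proof -
  have "isCont g z" if "z \<in> U" for z
    using assms that unfolding holo_on_def by (meson has_derivative_continuous)
  then show ?thesis by (simp add: continuous_at_imp_continuous_on)
qed

lemma open_line_dom:
  fixes a b :: "complex^'n::finite"
  assumes "open U"
  shows "open {t. a + t *s b \<in> U}"
proof -
  have "continuous_on UNIV (\<lambda>t::complex. a + t *s b)"
    by (intro continuous_intros)
  from open_vimage[OF assms this] show ?thesis by (simp add: vimage_def)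
qed

lemma open_line_dom0:
  fixes b :: "complex^'n::finite"
  assumes "open U"
  shows "open {t. t *s b \<in> U}"
  using open_line_dom[OF assms, of 0 b] by simp

definition ck :: "(complex^'n \<Rightarrow> complex) \<Rightarrow> nat \<Rightarrow> complex^'n \<Rightarrow> complex" where
  "ck g k z = (deriv ^^ k) (\<lambda>t. g (t *s z)) 0 / fact k"

lemma ck_homog:
  assumes "holo_on g U" "open U" "0 \<in> U"
  shows "ck g k (l *s z) = l ^ k * ck g k z"
proof -
  have "(deriv ^^ k) (\<lambda>w. (\<lambda>t. g (t *s z)) (l * w)) 0 = l ^ k * (deriv ^^ k) (\<lambda>t. g (t *s z)) (l * 0)"
  proof (rule higher_deriv_compose_linear[where S="{t. t *s (l *s z) \<in> U}" and T="{t. t *s z \<in> U}"])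
    show "(\<lambda>t. g (t *s z)) holomorphic_on {t. t *s z \<in> U}"
      by (rule holo_on_line_holomorphic0[OF assms(1)])
    show "open {t. t *s (l *s z) \<in> U}" "open {t. t *s z \<in> U}"
      by (rule open_line_dom0[OF assms(2)])+
    show "0 \<in> {t. t *s (l *s z) \<in> U}" using assms(3) by simp
    show "\<And>w. w \<in> {t. t *s (l *s z) \<in> U} \<Longrightarrow> l * w \<in> {t. t *s z \<in> U}"
      by (simp add: vector_smult_assoc mult.commute)
  qed
  moreover have "(\<lambda>w. (\<lambda>t. g (t *s z)) (l * w)) = (\<lambda>t. g (t *s (l *s z)))"
    by (simp add: vector_smult_assoc mult.commute)
  ultimately show ?thesis by (simp add: ck_def)
qed

lemma ck_cauchy:
  assumes "holo_on g U" "open U" "0 < \<rho>" "\<And>t. norm t \<le> \<rho> \<Longrightarrow> t *s z \<in> U"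
  shows "((\<lambda>t. g (t *s z) / t ^ Suc k) has_contour_integral (2 * pi * \<i> * ck g k z)) (circlepath 0 \<rho>)"
proof -
  have hol: "(\<lambda>t. g (t *s z)) holomorphic_on {t. t *s z \<in> U}"
    by (rule holo_on_line_holomorphic0[OF assms(1)])
  have sub: "cball 0 \<rho> \<subseteq> {t. t *s z \<in> U}" using assms(4) by auto
  have "((\<lambda>t. g (t *s z) / (t - 0) ^ Suc k) has_contour_integral ((2 * pi * \<i>) / fact k * (deriv ^^ k) (\<lambda>t. g (t *s z)) 0)) (circlepath 0 \<rho>)"
  proof (rule Cauchy_has_contour_integral_higher_derivative_circlepath)
    show "continuous_on (cball 0 \<rho>) (\<lambda>t. g (t *s z))"
      using holomorphic_on_imp_continuous_on[OF hol] sub continuous_on_subset by blast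
    show "(\<lambda>t. g (t *s z)) holomorphic_on ball 0 \<rho>"
      using hol sub holomorphic_on_subset ball_subset_cball by blast
    show "0 \<in> ball 0 \<rho>" using assms(3) by simp
  qed
  then show ?thesis by (simp add: ck_def)
qed

lemma contour_integral_param_cont:
  assumes cont: "continuous_on (S \<times> path_image \<gamma>) (\<lambda>(s,t). F s t)"
    and vp: "valid_path \<gamma>" and dcont: "continuous_on {0..1} (\<lambda>x. vector_derivative \<gamma> (at x))"
  shows "continuous_on S (\<lambda>s. contour_integral \<gamma> (F s))"
proof -
  have gc: "continuous_on {0..1} \<gamma>"
    using vp valid_path_imp_path path_def by blast
  have c1: "continuous_on (S \<times> {0..1}) (\<lambda>p. (fst p, \<gamma> (snd p)))"
    by (intro continuous_intros continuous_on_compose2[OF gc]) auto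
  have c2: "continuous_on (S \<times> {0..1}) (\<lambda>p. F (fst p) (\<gamma> (snd p)))"
  proof -
    have "(\<lambda>p. (fst p, \<gamma> (snd p))) ` (S \<times> {0..1}) \<subseteq> S \<times> path_image \<gamma>"
      by (auto simp: path_image_def)
    from continuous_on_compose2[OF cont c1 this] show ?thesis by (simp add: case_prod_unfold)
  qed
  have c3: "continuous_on (S \<times> {0..1}) (\<lambda>p. vector_derivative \<gamma> (at (snd p)))"
    by (intro continuous_on_compose2[OF dcont] continuous_intros) auto
  have "continuous_on S (\<lambda>s. integral (cbox 0 1) (\<lambda>x. F s (\<gamma> x) * vector_derivative \<gamma> (at x)))"
    by (rule integral_continuous_on_param)
       (use continuous_on_mult[OF c2 c3] in \<open>simp add: case_prod_unfold cbox_interval\<close>)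
  then show ?thesis by (simp add: contour_integral_integral cbox_interval)
qed

lemma vd_circlepath_cont: "continuous_on {0..1} (\<lambda>x. vector_derivative (circlepath z r) (at x))"
  unfolding vector_derivative_circlepath by (intro continuous_intros)

lemma vd_linepath_cont: "continuous_on {0..1} (\<lambda>x. vector_derivative (linepath p q) (at x))"
  by simp

lemma param_holo:
  fixes F :: "complex \<Rightarrow> complex \<Rightarrow> complex"
  assumes S: "open S" and \<rho>: "0 < \<rho>"
    and cont: "continuous_on (S \<times> sphere 0 \<rho>) (\<lambda>(s,t). F s t)"
    and hol: "\<And>t. t \<in> sphere 0 \<rho> \<Longrightarrow> (\<lambda>s. F s t) holomorphic_on S"
  shows "(\<lambda>s. contour_integral (circlepath 0 \<rho>) (F s)) holomorphic_on S"
proof -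
  let ?\<gamma> = "circlepath 0 \<rho>"
  have pim: "path_image ?\<gamma> = sphere 0 \<rho>" using \<rho> by simp
  have Phicont: "continuous_on S (\<lambda>s. contour_integral ?\<gamma> (F s))"
    by (rule contour_integral_param_cont) (use cont pim vd_circlepath_cont in auto)
  define I where "I p q t = contour_integral (linepath p q) (\<lambda>s. F s t)" for p q t
  have swap: "contour_integral (linepath p q) (\<lambda>s. contour_integral ?\<gamma> (F s)) = contour_integral ?\<gamma> (I p q)"
    and Iint: "I p q contour_integrable_on ?\<gamma>"
    if pq: "closed_segment p q \<subseteq> S" for p q
  proof -
    have c1: "continuous_on (closed_segment p q \<times> sphere 0 \<rho>) (\<lambda>(s,t). F s t)"
      by (rule continuous_on_subset[OF cont]) (use pq in auto)
    show "contour_integral (linepath p q) (\<lambda>s. contour_integral ?\<gamma> (F s)) = contour_integral ?\<gamma> (I p q)"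
      unfolding I_def
      by (rule contour_integral_swap) (use c1 pim vd_circlepath_cont in auto)
    have "continuous_on (sphere 0 \<rho>) (I p q)"
      unfolding I_def
      by (rule contour_integral_param_cont) (use continuous_on_swap_args[OF c1] in auto)
    then show "I p q contour_integrable_on ?\<gamma>"
      by (intro contour_integrable_continuous_circlepath) (use pim in simp)
  qed
  have "(\<lambda>s. contour_integral ?\<gamma> (F s)) analytic_on S"
  proof (rule Morera_triangle[OF Phicont S], intro impI)
    fix a b c assume hull: "convex hull {a, b, c} \<subseteq> S"
    have segs: "closed_segment a b \<subseteq> S" "closed_segment b c \<subseteq> S" "closed_segment c a \<subseteq> S"
      by (rule subset_trans[OF segments_subset_convex_hull(1) hull]
              subset_trans[OF segments_subset_convex_hull(3) hull]
              subset_trans[OF segments_subset_convex_hull(5) hull])+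
    have zero: "I a b t + I b c t + I c a t = 0" if t: "t \<in> sphere 0 \<rho>" for t
    proof -
      have h: "(\<lambda>s. F s t) holomorphic_on convex hull {a, b, c}"
        using hol[OF t] hull by (rule holomorphic_on_subset)
      have ci: "(\<lambda>s. F s t) contour_integrable_on linepath p q" if "closed_segment p q \<subseteq> convex hull {a,b,c}" for p q
        by (rule contour_integrable_continuous_linepath)
           (rule continuous_on_subset[OF holomorphic_on_imp_continuous_on[OF h] that])
      have "((\<lambda>s. F s t) has_contour_integral 0) (linepath a b +++ linepath b c +++ linepath c a)"
        by (rule Cauchy_theorem_triangle[OF h])
      then have "contour_integral (linepath a b +++ linepath b c +++ linepath c a) (\<lambda>s. F s t) = 0"
        by (rule contour_integral_unique)
      have c1: "(\<lambda>s. F s t) contour_integrable_on linepath a b"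
        and c2: "(\<lambda>s. F s t) contour_integrable_on linepath b c"
        and c3: "(\<lambda>s. F s t) contour_integrable_on linepath c a"
        by (rule ci; rule segments_subset_convex_hull)+
      have c23: "(\<lambda>s. F s t) contour_integrable_on (linepath b c +++ linepath c a)"
        by (rule contour_integrable_joinI[OF c2 c3]) auto
      have "contour_integral (linepath a b +++ linepath b c +++ linepath c a) (\<lambda>s. F s t)
          = contour_integral (linepath a b) (\<lambda>s. F s t) + contour_integral (linepath b c +++ linepath c a) (\<lambda>s. F s t)"
        by (rule contour_integral_join[OF c1 c23]) auto
      also have "contour_integral (linepath b c +++ linepath c a) (\<lambda>s. F s t)
          = contour_integral (linepath b c) (\<lambda>s. F s t) + contour_integral (linepath c a) (\<lambda>s. F s t)"
        by (rule contour_integral_join[OF c2 c3]) auto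
      finally show ?thesis
        unfolding I_def using \<open>contour_integral (linepath a b +++ linepath b c +++ linepath c a) (\<lambda>s. F s t) = 0\<close> by (simp add: add.assoc)
    qed
    have "contour_integral (linepath a b) (\<lambda>s. contour_integral ?\<gamma> (F s)) +
          contour_integral (linepath b c) (\<lambda>s. contour_integral ?\<gamma> (F s)) +
          contour_integral (linepath c a) (\<lambda>s. contour_integral ?\<gamma> (F s))
        = contour_integral ?\<gamma> (I a b) + contour_integral ?\<gamma> (I b c) + contour_integral ?\<gamma> (I c a)"
      using swap segs by simp
    also have "\<dots> = contour_integral ?\<gamma> (\<lambda>t. I a b t + I b c t + I c a t)"
      using Iint segs by (simp add: contour_integral_add contour_integrable_add)
    also have "\<dots> = 0"
      by (rule contour_integral_eq_0) (use zero pim \<rho> in auto)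
    finally show "contour_integral (linepath a b) (\<lambda>s. contour_integral ?\<gamma> (F s)) +
          contour_integral (linepath b c) (\<lambda>s. contour_integral ?\<gamma> (F s)) +
          contour_integral (linepath c a) (\<lambda>s. contour_integral ?\<gamma> (F s)) = 0" .
  qed
  then show ?thesis by (rule analytic_imp_holomorphic)
qed

lemma ck_line_entire:
  fixes g :: "complex^'n::finite \<Rightarrow> complex" and a b :: "complex^'n"
  assumes hg: "holo_on g U" and U: "open U" "0 \<in> U"
  shows "(\<lambda>s. ck g k (a + s *s b)) holomorphic_on UNIV"
proof -
  obtain \<epsilon> where \<epsilon>: "\<epsilon> > 0" "ball 0 \<epsilon> \<subseteq> U"
    using U openE by blast
  have loc: "(\<lambda>s. ck g k (a + s *s b)) holomorphic_on ball 0 R" if R: "R > 0" for R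
  proof -
    define M where "M = norm a + R * norm b + 1"
    have "0 \<le> R * norm b" using R by simp
    then have M: "M > 0" unfolding M_def by (smt (verit) norm_ge_zero)
    define \<rho> where "\<rho> = \<epsilon> / (2 * M)"
    have \<rho>: "\<rho> > 0" using \<epsilon> M by (simp add: \<rho>_def)
    have key: "t *s (a + s *s b) \<in> U" if s: "s \<in> ball 0 R" and t: "norm t < 2 * \<rho>" for s t
    proof -
      have "norm (a + s *s b) \<le> norm a + norm s * norm b"
        by (metis norm_smult_vec norm_triangle_ineq)
      also have "\<dots> \<le> norm a + R * norm b"
        using s by (auto intro!: mult_right_mono)
      finally have w: "norm (a + s *s b) < M" by (simp add: M_def)
      have "norm (t *s (a + s *s b)) = norm t * norm (a + s *s b)" by (rule norm_smult_vec)
      also have "\<dots> \<le> norm t * M" using w by (intro mult_left_mono) auto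
      also have "\<dots> < 2 * \<rho> * M" using t M by simp
      also have "\<dots> = \<epsilon>" using M by (simp add: \<rho>_def)
      finally show ?thesis using \<epsilon> by auto
    qed
    define F where "F s t = g (t *s (a + s *s b)) / t ^ Suc k" for s t
    have cg: "continuous_on U g" by (rule holo_on_continuous[OF hg])
    have "(\<lambda>s. contour_integral (circlepath 0 \<rho>) (F s)) holomorphic_on ball 0 R"
    proof (rule param_holo[OF open_ball \<rho>])
      have c1: "continuous_on (ball 0 R \<times> sphere 0 \<rho>) (\<lambda>p. snd p *s (a + fst p *s b))"
        by (intro continuous_intros)
      have c2: "continuous_on (ball 0 R \<times> sphere 0 \<rho>) (\<lambda>p. g (snd p *s (a + fst p *s b)))"
        by (rule continuous_on_compose2[OF cg c1]) (use key \<rho> in auto)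
      show "continuous_on (ball 0 R \<times> sphere 0 \<rho>) (\<lambda>(s, t). F s t)"
        unfolding F_def case_prod_unfold
        by (intro continuous_intros c2) (use \<rho> in auto)
    next
      fix t :: complex assume t: "t \<in> sphere 0 \<rho>"
      have eq: "t *s (a + s *s b) = t *s a + s *s (t *s b)" for s
        by (simp add: vector_add_ldistrib vector_smult_assoc mult.commute)
      have "(\<lambda>s. g (t *s a + s *s (t *s b))) holomorphic_on {s. t *s a + s *s (t *s b) \<in> U}"
        by (rule holo_on_line_holomorphic[OF hg])
      moreover have "ball 0 R \<subseteq> {s. t *s a + s *s (t *s b) \<in> U}"
      proof
        fix s :: complex assume s: "s \<in> ball 0 R"
        have "t *s (a + s *s b) \<in> U" by (rule key[OF s]) (use t \<rho> in auto)
        then show "s \<in> {s. t *s a + s *s (t *s b) \<in> U}" by (metis eq mem_Collect_eq)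
      qed
      ultimately have "(\<lambda>s. g (t *s a + s *s (t *s b))) holomorphic_on ball 0 R"
        by (rule holomorphic_on_subset)
      then show "(\<lambda>s. F s t) holomorphic_on ball 0 R"
        unfolding F_def eq by (intro holomorphic_intros) (use t \<rho> in auto)
    qed
    then have "(\<lambda>s. contour_integral (circlepath 0 \<rho>) (F s) / (2 * pi * \<i>)) holomorphic_on ball 0 R"
      by (intro holomorphic_intros) auto
    moreover have "contour_integral (circlepath 0 \<rho>) (F s) / (2 * pi * \<i>) = ck g k (a + s *s b)"
      if s: "s \<in> ball 0 R" for s
    proof -
      have "(F s has_contour_integral (2 * pi * \<i> * ck g k (a + s *s b))) (circlepath 0 \<rho>)"
        unfolding F_def
        by (rule ck_cauchy[OF hg U(1) \<rho>]) (use key[OF s] \<rho> in auto)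
      then show ?thesis by (simp add: contour_integral_unique)
    qed
    ultimately show ?thesis by (rule holomorphic_transform)
  qed
  show ?thesis
    unfolding holomorphic_on_def
  proof
    fix x :: complex
    have "(\<lambda>s. ck g k (a + s *s b)) field_differentiable at x"
      by (rule holomorphic_on_imp_differentiable_at[OF loc[of "norm x + 1"]])
         (auto simp: add_nonneg_pos)
    then show "(\<lambda>s. ck g k (a + s *s b)) field_differentiable at x within UNIV"
      by (simp add: field_differentiable_at_within)
  qed
qed

lemma ck_cpoly:
  fixes g :: "complex^'n::finite \<Rightarrow> complex"
  assumes hg: "holo_on g U" and U: "open U" "0 \<in> U"
  shows "cpoly k (ck g k)"
  unfolding cpoly_def
proof (intro allI)
  fix z :: "complex^'n" and i
  define a where "a = upd z i 0"
  define b :: "complex^'n" where "b = axis i 1"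
  have ab: "a + s *s b = upd z i s" for s
    by (simp add: a_def b_def upd_def axis_def vec_eq_iff vector_scalar_mult_def)
  define \<phi> where "\<phi> s = ck g k (a + s *s b)" for s
  have hphi: "\<phi> holomorphic_on UNIV"
    unfolding \<phi>_def by (rule ck_line_entire[OF hg U])
  have hpsi: "(\<lambda>u. ck g k (b + u *s a)) holomorphic_on UNIV"
    by (rule ck_line_entire[OF hg U])
  obtain B where B: "B \<ge> 0" "\<And>u. u \<in> cball 0 1 \<Longrightarrow> norm (ck g k (b + u *s a)) \<le> B"
    using continuous_on_compact_bound[OF compact_cball holomorphic_on_imp_continuous_on[OF holomorphic_on_subset[OF hpsi]]]
    by blast
  have bound: "norm (\<phi> s) \<le> B * norm s ^ k" if s: "1 \<le> norm s" for s
  proof -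
    have s0: "s \<noteq> 0" using s by auto
    have eqn: "a + s *s b = s *s (b + (1/s) *s a)"
      using s0 by (simp add: vector_add_ldistrib vector_smult_assoc add.commute)
    have "\<phi> s = ck g k (s *s (b + (1/s) *s a))"
      unfolding \<phi>_def by (simp only: eqn)
    also have "\<dots> = s ^ k * ck g k (b + (1/s) *s a)"
      by (rule ck_homog[OF hg U])
    finally have "\<phi> s = s ^ k * ck g k (b + (1/s) *s a)" .
    moreover have "norm (ck g k (b + (1/s) *s a)) \<le> B"
      using s by (intro B(2)) (auto simp: norm_divide divide_le_eq)
    ultimately show ?thesis
      by (simp add: norm_mult norm_power) (metis mult.commute mult_left_mono norm_ge_zero zero_le_power)
  qed
  have "\<phi> \<xi> = (\<Sum>j\<le>k. (deriv ^^ j) \<phi> 0 / fact j * \<xi> ^ j)" for \<xi>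
    by (rule Liouville_polynomial[OF hphi, of 1 B]) (use bound in auto)
  then show "\<exists>\<beta>. \<forall>s. ck g k (upd z i s) = (\<Sum>j\<le>k. \<beta> j * s ^ j)"
    by (intro exI[of _ "\<lambda>j. (deriv ^^ j) \<phi> 0 / fact j"]) (auto simp: \<phi>_def ab)
qed

lemma ck_poly_fun:
  assumes "holo_on g U" "open U" "0 \<in> U"
  shows "poly_fun (ck g k)"
  by (rule cpoly_poly_fun[OF ck_cpoly[OF assms]])

lemma ck_series_uniform:
  fixes g :: "complex^'n::finite \<Rightarrow> complex"
  assumes hg: "holo_on g U" and U: "open U"
    and bal: "\<And>z l. z \<in> U \<Longrightarrow> norm l \<le> 1 \<Longrightarrow> l *s z \<in> U"
    and K: "compact K" "K \<subseteq> U"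
  shows "uniform_limit K (\<lambda>m z. \<Sum>k<m. ck g k z) g sequentially"
proof -
  define C where "C = (\<lambda>p. fst p *s snd p) ` (cball (0::complex) 1 \<times> K)"
  have cC: "compact C" unfolding C_def
    by (intro compact_continuous_image compact_Times compact_cball K continuous_intros)
  have CU: "C \<subseteq> U" unfolding C_def using K bal by auto
  obtain \<delta> where \<delta>: "\<delta> > 0" "(\<Union>x\<in>C. ball x \<delta>) \<subseteq> U"
    using compact_subset_open_imp_ball_epsilon_subset[OF cC U CU] by blast
  obtain NB where NB: "NB \<ge> 0" "\<And>z. z \<in> K \<Longrightarrow> norm z \<le> NB"
    using continuous_on_compact_bound[OF K(1) continuous_on_id] by blast
  define r2 where "r2 = 1 + \<delta> / (NB + 1)"
  define r where "r = 1 + \<delta> / (2 * (NB + 1))"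
  have r: "1 < r" "r < r2" using \<delta> NB by (auto simp: r_def r2_def divide_strict_left_mono)
  have inU: "t *s z \<in> U" if z: "z \<in> K" and t: "norm t \<le> r2" for t z
  proof (cases "norm t \<le> 1")
    case True
    then show ?thesis using CU z unfolding C_def by force
  next
    case False
    define u where "u = t / norm t"
    have nt: "norm t > 0" using False by auto
    have u: "norm u = 1" using nt by (simp add: u_def norm_divide)
    have x: "u *s z \<in> C" unfolding C_def using u z by force
    have "t *s z - u *s z = (t - u) *s z" by (simp add: vector_sub_rdistrib)
    then have "dist (u *s z) (t *s z) = norm (t - u) * norm z"
      by (metis dist_norm norm_minus_commute norm_smult_vec)
    also have "norm (t - u) = norm t - 1"
    proof -
      have "t - u = of_real (norm t - 1) * u"
        using nt by (simp add: u_def field_simps)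
      then have "norm (t - u) = norm (of_real (norm t - 1) :: complex) * norm u"
        by (simp only: norm_mult)
      also have "norm (of_real (norm t - 1) :: complex) = norm t - 1"
        by (subst norm_of_real) (use False in simp)
      finally show ?thesis using u by simp
    qed
    also have "(norm t - 1) * norm z \<le> (\<delta> / (NB + 1)) * NB"
      using t False NB z by (intro mult_mono) (auto simp: r2_def)
    also have "\<dots> < \<delta>" using \<delta> NB by (simp add: field_simps)
    finally have "t *s z \<in> ball (u *s z) \<delta>" by (simp add: mem_ball)
    then show ?thesis using \<delta>(2) x by blast
  qed
  define C2 where "C2 = (\<lambda>p. fst p *s snd p) ` (cball (0::complex) r \<times> K)"
  have cC2: "compact C2" unfolding C2_def
    by (intro compact_continuous_image compact_Times compact_cball K continuous_intros)
  have C2U: "C2 \<subseteq> U" unfolding C2_def using inU r by force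
  obtain Bg where Bg: "Bg \<ge> 0" "\<And>x. x \<in> C2 \<Longrightarrow> norm (g x) \<le> Bg"
    using continuous_on_compact_bound[OF cC2 continuous_on_subset[OF holo_on_continuous[OF hg] C2U]] by blast
  have hol: "(\<lambda>t. g (t *s z)) holomorphic_on ball 0 r2" if z: "z \<in> K" for z
    by (rule holomorphic_on_subset[OF holo_on_line_holomorphic0[OF hg]]) (use inU z in auto)
  have bnd: "norm (ck g k z) \<le> Bg * (1 / r) ^ k" if z: "z \<in> K" for k z
  proof -
    have "norm ((deriv ^^ k) (\<lambda>t. g (t *s z)) 0) \<le> fact k * Bg / r ^ k"
    proof (rule Cauchy_inequality)
      show "(\<lambda>t. g (t *s z)) holomorphic_on ball 0 r"
        by (rule holomorphic_on_subset[OF hol[OF z]]) (use r in auto)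
      show "continuous_on (cball 0 r) (\<lambda>t. g (t *s z))"
        by (rule continuous_on_subset[OF holomorphic_on_imp_continuous_on[OF hol[OF z]]]) (use r in auto)
      show "0 < r" using r by simp
      fix x :: complex assume "norm (0 - x) = r"
      then have "x *s z \<in> C2" unfolding C2_def using z by force
      then show "norm (g (x *s z)) \<le> Bg" by (rule Bg(2))
    qed
    then show ?thesis
      by (simp add: ck_def norm_divide divide_le_eq field_simps power_one_over)
  qed
  have summ: "summable (\<lambda>k. Bg * (1 / r) ^ k)"
    using r by (intro summable_mult summable_geometric) auto
  have ul: "uniform_limit K (\<lambda>m z. \<Sum>k<m. ck g k z) (\<lambda>z. suminf (\<lambda>k. ck g k z)) sequentially"
    by (rule Weierstrass_m_test[OF bnd summ])
  have eq: "suminf (\<lambda>k. ck g k z) = g z" if z: "z \<in> K" for z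
  proof -
    have "(\<lambda>n. (deriv ^^ n) (\<lambda>t. g (t *s z)) 0 / fact n * (1 - 0) ^ n) sums (g (1 *s z))"
      by (rule holomorphic_power_series[OF hol[OF z]]) (use r in auto)
    then have "(\<lambda>k. ck g k z) sums g z" by (simp add: ck_def)
    then show ?thesis by (rule sums_unique[symmetric])
  qed
  have "uniform_limit K (\<lambda>m z. \<Sum>k<m. ck g k z) (\<lambda>z. suminf (\<lambda>k. ck g k z)) sequentially
      \<longleftrightarrow> uniform_limit K (\<lambda>m z. \<Sum>k<m. ck g k z) g sequentially"
    by (rule uniform_limit_cong') (simp_all add: eq)
  then show ?thesis using ul by simp
qed

lemma ck_measurable:
  fixes f :: "'a \<Rightarrow> complex^'n::finite \<Rightarrow> complex"
  assumes U: "open U" "0 \<in> U" and rf: "random_holomorphic M U f"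
  shows "(\<lambda>\<omega>. ck (f \<omega>) k z) \<in> borel_measurable M"
proof -
  define D where "D = {t. t *s z \<in> U}"
  have D: "open D" "0 \<in> D" using open_line_dom0[OF U(1)] U(2) by (auto simp: D_def)
  have hol: "(\<lambda>t. f \<omega> (t *s z)) holomorphic_on D" if "\<omega> \<in> space M" for \<omega>
    unfolding D_def using rf that by (intro holo_on_line_holomorphic0) (auto simp: random_holomorphic_def)
  have meas: "(\<lambda>\<omega>. (deriv ^^ n) (\<lambda>t. f \<omega> (t *s z)) t) \<in> borel_measurable M" if "t \<in> D" for n t
    using that
  proof (induction n arbitrary: t)
    case 0
    then show ?case using rf by (simp add: random_holomorphic_def D_def)
  next
    case (Suc n t)
    obtain \<delta> where \<delta>: "\<delta> > 0" "ball t \<delta> \<subseteq> D" using D(1) Suc.prems openE by blast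
    define h where "h j = complex_of_real (\<delta> / 2 * inverse (real (Suc j)))" for j
    have hin: "t + h j \<in> D" for j
    proof -
      have "norm (h j) = \<bar>\<delta> / 2 * inverse (real (Suc j))\<bar>" unfolding h_def by (rule norm_of_real)
      also have "\<dots> = \<delta> / 2 * inverse (real (Suc j))" using \<delta> by simp
      also have "\<dots> \<le> \<delta> / 2 * 1"
        using \<delta> by (intro mult_left_mono) (auto simp: inverse_le_1_iff)
      also have "\<dots> < \<delta>" using \<delta> by simp
      finally show ?thesis using \<delta>(2) by (auto simp: dist_norm)
    qed
    have hlim: "filterlim h (at 0) sequentially"
    proof -
      have "(\<lambda>j. \<delta> / 2 * inverse (real (Suc j))) \<longlonglongrightarrow> \<delta> / 2 * 0"
        by (intro tendsto_mult tendsto_const LIMSEQ_inverse_real_of_nat)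
      then have "(\<lambda>j. complex_of_real (\<delta> / 2 * inverse (real (Suc j)))) \<longlonglongrightarrow> of_real (\<delta> / 2 * 0)"
        by (rule tendsto_of_real)
      then have "h \<longlonglongrightarrow> 0" unfolding h_def by simp
      moreover have "h j \<noteq> 0" for j by (simp only: h_def of_real_eq_0_iff) (use \<delta> in simp)
      ultimately show ?thesis by (simp add: filterlim_at)
    qed
    let ?q = "\<lambda>j \<omega>. ((deriv ^^ n) (\<lambda>t. f \<omega> (t *s z)) (t + h j) - (deriv ^^ n) (\<lambda>t. f \<omega> (t *s z)) t) / h j"
    show ?case
    proof (rule borel_measurable_LIMSEQ_metric[where f="?q"])
      fix j
      show "?q j \<in> borel_measurable M"
        using Suc.IH[OF hin[of j]] Suc.IH[OF Suc.prems] by measurable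
    next
      fix \<omega> assume \<omega>: "\<omega> \<in> space M"
      have "(deriv ^^ n) (\<lambda>t. f \<omega> (t *s z)) holomorphic_on D"
        by (rule holomorphic_higher_deriv[OF hol[OF \<omega>] D(1)])
      then have "((deriv ^^ n) (\<lambda>t. f \<omega> (t *s z)) has_field_derivative
                  deriv ((deriv ^^ n) (\<lambda>t. f \<omega> (t *s z))) t) (at t)"
        using D(1) Suc.prems by (intro DERIV_deriv_iff_field_differentiable[THEN iffD2])
          (rule holomorphic_on_imp_differentiable_at)
      then have "((\<lambda>x. ((deriv ^^ n) (\<lambda>t. f \<omega> (t *s z)) (t + x) - (deriv ^^ n) (\<lambda>t. f \<omega> (t *s z)) t) / x)
                 \<longlongrightarrow> deriv ((deriv ^^ n) (\<lambda>t. f \<omega> (t *s z))) t) (at 0)"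
        by (simp add: DERIV_def)
      from filterlim_compose[OF this hlim]
      show "(\<lambda>j. ?q j \<omega>) \<longlonglongrightarrow> (deriv ^^ Suc n) (\<lambda>t. f \<omega> (t *s z)) t"
        by simp
    qed
  qed
  show ?thesis
    unfolding ck_def using meas[OF D(2), of k] by measurable
qed


theorem theorem4p5:
  fixes M :: "'a measure" and U :: "(complex ^ 'n) set"
    and f :: "'a \<Rightarrow> complex ^ 'n \<Rightarrow> complex"
  assumes "open U"
    and "\<And>z l. z \<in> U \<Longrightarrow> norm l \<le> 1 \<Longrightarrow> l *s z \<in> U"
    and "random_holomorphic M U f"
  shows "\<exists>p :: nat \<Rightarrow> 'a \<Rightarrow> complex ^ 'n \<Rightarrow> complex.
           (\<forall>m. random_polynomial M (p m)) \<and>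
           (\<forall>\<omega> \<in> space M. \<forall>K. compact K \<and> K \<subseteq> U \<longrightarrow>
               uniform_limit K (\<lambda>m. p m \<omega>) (f \<omega>) sequentially)"
proof (cases "U = {}")
  case True
  show ?thesis
  proof (intro exI[of _ "\<lambda>m \<omega> z. 0"] conjI allI ballI impI)
    fix m show "random_polynomial M (\<lambda>\<omega> z. 0::complex)"
      unfolding random_polynomial_def by (auto intro: poly_fun_const)
  next
    fix \<omega> K assume "compact K \<and> K \<subseteq> U"
    then have "K = {}" using True by auto
    then show "uniform_limit K (\<lambda>m. \<lambda>z. 0) (f \<omega>) sequentially"
      by (simp add: uniform_limit_iff)
  qed
next
  case False
  then obtain z0 where "z0 \<in> U" by auto
  then have U0: "0 \<in> U" using assms(2)[of z0 0] by simp
  have hol: "holo_on (f \<omega>) U" if "\<omega> \<in> space M" for \<omega>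
    using assms(3) that by (simp add: random_holomorphic_def)
  show ?thesis
  proof (intro exI[of _ "\<lambda>m \<omega> z. \<Sum>k<m. ck (f \<omega>) k z"] conjI allI ballI impI)
    fix m show "random_polynomial M (\<lambda>\<omega> z. \<Sum>k<m. ck (f \<omega>) k z)"
      unfolding random_polynomial_def
    proof (intro conjI ballI allI)
      fix \<omega> assume "\<omega> \<in> space M"
      then show "poly_fun (\<lambda>z. \<Sum>k<m. ck (f \<omega>) k z)"
        by (intro poly_fun_sum ck_poly_fun[OF hol assms(1) U0]) auto
    next
      fix z
      show "(\<lambda>\<omega>. \<Sum>k<m. ck (f \<omega>) k z) \<in> borel_measurable M"
        by (intro borel_measurable_sum ck_measurable[OF assms(1) U0 assms(3)])
    qed
  next
    fix \<omega> K assume \<omega>: "\<omega> \<in> space M" and K: "compact K \<and> K \<subseteq> U"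
    show "uniform_limit K (\<lambda>m z. \<Sum>k<m. ck (f \<omega>) k z) (f \<omega>) sequentially"
      by (rule ck_series_uniform[OF hol[OF \<omega>] assms(1) assms(2)]) (use K in auto)
  qed
qed

end
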